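(* Let $X_1,\dots,X_n$ be i.i.d. random elements of a measurable space $(E,\mathcal{E})$ with $n\ge 2m$, and let $h:E^m\to\mathbb{R}$ be a symmetric kernel with $\mathbb{E}\{h^2(X_1,\dots,X_m)\}<\infty$. Let $$S_m=\binom{n}{2m}^{-1}\binom{2m}{m}^{-1}\sum_{c=1}^m\binom{n-m}{2m-c}\binom{m}{c}S_{mc},\qquad S_{mc}=\sum_{j=0}^c\binom{c}{j}\binom{2m-c}{m-j}\left(\theta\sigma_j^2+\theta\sigma_{c-j}^2\right).$$ Then $S_m=\frac{\theta}{2}\,\mathbb{V}(2\widehat{\theta})$.
   Context: $\theta=\mathbb{E}\{h(X_1,\dots,X_m)\}$. For $1\le c\le m$, $h_c(x_1,\dots,x_c)=\mathbb{E}\{h(X_1,\dots,X_m)\mid X_1=x_1,\dots,X_c=x_c\}$ and $\sigma_c^2=\mathbb{V}\{h_c(X_1,\dots,X_c)\}$; $\sigma_0^2=0$. $\widehat{\theta}=\binom{n}{m}^{-1}\sum_{1\le i_1<\dots<i_m\le n}h(X_{i_1},\dots,X_{i_m})$ is the U-statistic estimating $\theta$. Binomial coefficients $\binom{a}{b}$ are $0$ when $b>a$. *)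

theory Defs
  imports "HOL-Probability.Probability"
begin

text \<open>Kernels h : E^m -> R are functions on (nat => 'e) applied to arguments
  restricted to {..<m} (i.e. points of the product space E^m, coordinates 0..m-1).\<close>

definition kargs :: "nat \<Rightarrow> (nat \<Rightarrow> 'e) \<Rightarrow> (nat \<Rightarrow> 'e)" where
  "kargs m x = restrict x {..<m}"

definition Utheta :: "'a measure \<Rightarrow> (nat \<Rightarrow> 'a \<Rightarrow> 'e) \<Rightarrow> nat \<Rightarrow> ((nat \<Rightarrow> 'e) \<Rightarrow> real) \<Rightarrow> real" where
  "Utheta M X m h = integral\<^sup>L M (\<lambda>\<omega>. h (kargs m (\<lambda>i. X i \<omega>)))"

text \<open>h_c(x_1..x_c) = E h(x_1,..,x_c,X_{c+1},..,X_m), integrating the remaining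
  m-c independent coordinates against the common distribution P of the X_i.\<close>
definition hcond :: "'e measure \<Rightarrow> nat \<Rightarrow> ((nat \<Rightarrow> 'e) \<Rightarrow> real) \<Rightarrow> nat \<Rightarrow> (nat \<Rightarrow> 'e) \<Rightarrow> real" where
  "hcond P m h c x =
     (\<integral>y. h (kargs m (\<lambda>i. if i < c then x i else y i)) \<partial>(PiM {c..<m} (\<lambda>_. P)))"

definition Usigma2 :: "'a measure \<Rightarrow> 'e measure \<Rightarrow> (nat \<Rightarrow> 'a \<Rightarrow> 'e) \<Rightarrow> nat \<Rightarrow> ((nat \<Rightarrow> 'e) \<Rightarrow> real) \<Rightarrow> nat \<Rightarrow> real" where
  "Usigma2 M N X m h c =
     (if c = 0 then 0 else
      prob_space.variance M (\<lambda>\<omega>. hcond (distr M N (X 0)) m h c (\<lambda>i. X i \<omega>)))"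

definition Ustat :: "nat \<Rightarrow> nat \<Rightarrow> ((nat \<Rightarrow> 'e) \<Rightarrow> real) \<Rightarrow> (nat \<Rightarrow> 'a \<Rightarrow> 'e) \<Rightarrow> 'a \<Rightarrow> real" where
  "Ustat n m h X \<omega> =
     (\<Sum>S\<in>{S. S \<subseteq> {..<n} \<and> card S = m}.
        h (kargs m (\<lambda>k. X (sorted_list_of_set S ! k) \<omega>))) / real (n choose m)"

end

theory Submission
  imports Defs
begin

lemma choose_mult_gen:
  fixes N a p :: nat
  assumes "p \<le> a"
  shows "(N choose a) * (a choose p) = (N choose p) * ((N - p) choose (a - p))"
proof (cases "a \<le> N")
  case True thus ?thesis using choose_mult[OF assms True] by simp
next
  case False
  show ?thesis
  proof (cases "p \<le> N")
    case True
    then have "N - p < a - p" using assms False by linarith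
    then show ?thesis using False by (simp add: binomial_eq_0)
  qed (use False in \<open>simp add: binomial_eq_0\<close>)
qed

lemma key_nat:
  fixes n m j :: nat
  assumes "j \<le> m" "2*m \<le> n"
  shows "(\<Sum>c\<le>m. ((n-m) choose (2*m-c)) * (m choose c) * (c choose j) * ((2*m-c) choose (m-j)))
       = ((n-m) choose m) * (m choose j) * ((n-m) choose (m-j))"
proof -
  have "(\<Sum>c\<le>m. ((n-m) choose (2*m-c)) * (m choose c) * (c choose j) * ((2*m-c) choose (m-j)))
      = (\<Sum>c\<in>{j..m}. ((n-m) choose (2*m-c)) * (m choose c) * (c choose j) * ((2*m-c) choose (m-j)))"
    by (rule sum.mono_neutral_right) auto
  also have "\<dots> = (\<Sum>c\<in>{j..m}. (m choose j) * ((n-m) choose (m-j)) * (((m-j) choose (c-j)) * ((n-2*m+j) choose (m-(c-j)))))"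
  proof (rule sum.cong[OF refl])
    fix c assume c: "c \<in> {j..m}"
    have e1: "(m choose c) * (c choose j) = (m choose j) * ((m-j) choose (c-j))"
      using c by (intro choose_mult) auto
    have e2: "((n-m) choose (2*m-c)) * ((2*m-c) choose (m-j)) = ((n-m) choose (m-j)) * ((n-m-(m-j)) choose (2*m-c-(m-j)))"
      using c by (intro choose_mult_gen) auto
    have e3: "n-m-(m-j) = n-2*m+j" "2*m-c-(m-j) = m-(c-j)" using c assms by auto
    show "((n-m) choose (2*m-c)) * (m choose c) * (c choose j) * ((2*m-c) choose (m-j)) = (m choose j) * ((n-m) choose (m-j)) * (((m-j) choose (c-j)) * ((n-2*m+j) choose (m-(c-j))))"
    proof -
      have "((n-m) choose (2*m-c)) * (m choose c) * (c choose j) * ((2*m-c) choose (m-j))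
         = ((m choose c) * (c choose j)) * (((n-m) choose (2*m-c)) * ((2*m-c) choose (m-j)))" by (simp add: ac_simps)
      also have "\<dots> = (m choose j) * ((m-j) choose (c-j)) * (((n-m) choose (m-j)) * ((n-2*m+j) choose (m-(c-j))))"
        by (simp only: e1 e2 e3)
      finally show ?thesis by (simp add: ac_simps)
    qed
  qed
  also have "\<dots> = (m choose j) * ((n-m) choose (m-j)) * (\<Sum>c\<in>{j..m}. ((m-j) choose (c-j)) * ((n-2*m+j) choose (m-(c-j))))"
    by (simp add: sum_distrib_left)
  also have "(\<Sum>c\<in>{j..m}. ((m-j) choose (c-j)) * ((n-2*m+j) choose (m-(c-j)))) = (\<Sum>i\<le>m-j. ((m-j) choose i) * ((n-2*m+j) choose (m-i)))"
    by (rule sum.reindex_bij_witness[where i="\<lambda>i. i + j" and j="\<lambda>c. c - j"]) (use assms in auto)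
  also have "\<dots> = (\<Sum>i\<le>m. ((m-j) choose i) * ((n-2*m+j) choose (m-i)))"
    by (rule sum.mono_neutral_left) auto
  also have "\<dots> = (m - j + (n-2*m+j)) choose m" by (rule vandermonde)
  also have "m - j + (n-2*m+j) = n - m" using assms by auto
  finally show ?thesis by (simp add: ac_simps)
qed

lemma comb_identity:
  fixes s :: "nat \<Rightarrow> real" and t :: real and n m :: nat
  assumes s0: "s 0 = 0" and m: "m \<ge> 1" and n: "n \<ge> 2 * m"
  shows "1 / real (n choose (2 * m)) * (1 / real ((2 * m) choose m)) *
          (\<Sum>c = 1..m. real ((n - m) choose (2 * m - c)) * real (m choose c) *
             (\<Sum>j = 0..c. real (c choose j) * real ((2 * m - c) choose (m - j)) *
                (t * s j + t * s (c - j))))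
       = t / 2 * (4 * ((\<Sum>k\<le>m. real (m choose k) * real ((n-m) choose (m-k)) * s k) / real (n choose m)))"
proof -
  define w where "w c j = real ((n - m) choose (2 * m - c)) * real (m choose c) * real (c choose j) * real ((2 * m - c) choose (m - j))" for c j
  have inner: "(\<Sum>j = 0..c. real (c choose j) * real ((2 * m - c) choose (m - j)) * (t * s j + t * s (c - j)))
      = 2 * t * (\<Sum>j = 0..c. real (c choose j) * real ((2 * m - c) choose (m - j)) * s j)" if c: "c \<le> m" for c
  proof -
    have "(\<Sum>j = 0..c. real (c choose j) * real ((2 * m - c) choose (m - j)) * s (c - j))
        = (\<Sum>j = 0..c. real (c choose (c - j)) * real ((2 * m - c) choose (m - (c - j))) * s j)"
      by (rule sum.reindex_bij_witness[where i="\<lambda>j. c - j" and j="\<lambda>j. c - j"]) (use assms in auto)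
    also have "\<dots> = (\<Sum>j = 0..c. real (c choose j) * real ((2 * m - c) choose (m - j)) * s j)"
    proof (rule sum.cong[OF refl])
      fix j assume j: "j \<in> {0..c}"
      have "c choose (c - j) = c choose j" using j by (simp add: binomial_symmetric[symmetric])
      moreover have "(2 * m - c) choose (m - (c - j)) = (2 * m - c) choose (m - j)"
      proof -
        have "(2*m - c) choose (m - (c - j)) = (2*m-c) choose ((2*m-c) - (m - (c-j)))"
          using j c by (intro binomial_symmetric) auto
        moreover have "(2*m-c) - (m - (c-j)) = m - j" using j c by auto
        ultimately show ?thesis by simp
      qed
      ultimately show "real (c choose (c - j)) * real ((2 * m - c) choose (m - (c - j))) * s j = real (c choose j) * real ((2 * m - c) choose (m - j)) * s j" by simp
    qed
    finally have sym: "(\<Sum>j = 0..c. real (c choose j) * real ((2 * m - c) choose (m - j)) * s (c - j)) = (\<Sum>j = 0..c. real (c choose j) * real ((2 * m - c) choose (m - j)) * s j)" .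
    define a where "a j = real (c choose j) * real ((2 * m - c) choose (m - j))" for j
    have "(\<Sum>j = 0..c. a j * (t * s j + t * s (c - j))) = (\<Sum>j = 0..c. t * (a j * s j) + t * (a j * s (c - j)))"
      by (rule sum.cong) (simp_all add: algebra_simps)
    also have "\<dots> = t * (\<Sum>j = 0..c. a j * s j) + t * (\<Sum>j = 0..c. a j * s (c - j))"
      by (simp add: sum.distrib sum_distrib_left)
    also have "\<dots> = t * (\<Sum>j = 0..c. a j * s j) + t * (\<Sum>j = 0..c. a j * s j)"
      using sym by (simp add: a_def)
    finally show ?thesis by (simp add: a_def)
  qed
  have A: "(\<Sum>c = 1..m. real ((n - m) choose (2 * m - c)) * real (m choose c) *
             (\<Sum>j = 0..c. real (c choose j) * real ((2 * m - c) choose (m - j)) * (t * s j + t * s (c - j))))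
      = 2 * t * (\<Sum>c = 1..m. \<Sum>j\<le>m. w c j * s j)"
  proof -
    have "(\<Sum>c = 1..m. real ((n - m) choose (2 * m - c)) * real (m choose c) *
             (\<Sum>j = 0..c. real (c choose j) * real ((2 * m - c) choose (m - j)) * (t * s j + t * s (c - j))))
       = (\<Sum>c = 1..m. 2 * t * (\<Sum>j = 0..c. w c j * s j))"
    proof (rule sum.cong[OF refl])
      fix c assume "c \<in> {1..m}"
      then have c: "c \<le> m" by simp
      show "real ((n - m) choose (2 * m - c)) * real (m choose c) *
             (\<Sum>j = 0..c. real (c choose j) * real ((2 * m - c) choose (m - j)) * (t * s j + t * s (c - j)))
           = 2 * t * (\<Sum>j = 0..c. w c j * s j)"
        unfolding inner[OF c] by (simp add: w_def sum_distrib_left algebra_simps)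
    qed
    also have "\<dots> = (\<Sum>c = 1..m. 2 * t * (\<Sum>j \<le> m. w c j * s j))"
    proof (rule sum.cong[OF refl])
      fix c assume "c \<in> {1..m}"
      then have "(\<Sum>j = 0..c. w c j * s j) = (\<Sum>j \<le> m. w c j * s j)"
        by (intro sum.mono_neutral_left) (auto simp: w_def)
      then show "2 * t * (\<Sum>j = 0..c. w c j * s j) = 2 * t * (\<Sum>j \<le> m. w c j * s j)" by simp
    qed
    finally show ?thesis by (simp add: sum_distrib_left)
  qed
  have B: "(\<Sum>c = 1..m. \<Sum>j\<le>m. w c j * s j) = (\<Sum>j\<le>m. s j * (\<Sum>c\<le>m. w c j))"
  proof -
    have "(\<Sum>c = 1..m. \<Sum>j\<le>m. w c j * s j) = (\<Sum>c \<le> m. \<Sum>j\<le>m. w c j * s j)"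
    proof -
      have "{..m} = insert 0 {1..m}" by auto
      moreover have "(\<Sum>j\<le>m. w 0 j * s j) = 0"
        by (rule sum.neutral) (auto simp: w_def s0)
      ultimately show ?thesis by simp
    qed
    also have "\<dots> = (\<Sum>j\<le>m. \<Sum>c\<le>m. w c j * s j)" by (rule sum.swap)
    finally show ?thesis by (simp add: sum_distrib_left mult.commute)
  qed
  have Cw: "(\<Sum>c\<le>m. w c j) = real ((n-m) choose m) * real (m choose j) * real ((n-m) choose (m-j))" if "j \<le> m" for j
  proof -
    have "(\<Sum>c\<le>m. w c j) = real (\<Sum>c\<le>m. ((n-m) choose (2*m-c)) * (m choose c) * (c choose j) * ((2*m-c) choose (m-j)))"
      by (simp add: w_def)
    also have "\<dots> = real (((n-m) choose m) * (m choose j) * ((n-m) choose (m-j)))"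
      using key_nat[OF that n] by simp
    finally show ?thesis by simp
  qed
  have D: "real (n choose (2*m)) * real ((2*m) choose m) = real (n choose m) * real ((n-m) choose m)"
  proof -
    have "(n choose (2*m)) * ((2*m) choose m) = (n choose m) * ((n - m) choose (2*m - m))"
      using n by (intro choose_mult) auto
    then show ?thesis by (simp flip: of_nat_mult)
  qed
  have pos1: "real (n choose m) > 0" using n by simp
  have pos2: "real ((n-m) choose m) > 0" using n by simp
  have E: "(\<Sum>j\<le>m. s j * (\<Sum>c\<le>m. w c j)) = real ((n-m) choose m) * (\<Sum>k\<le>m. real (m choose k) * real ((n-m) choose (m-k)) * s k)"
    by (simp add: Cw sum_distrib_left algebra_simps)
  show ?thesis
    unfolding A B E
    using pos1 pos2 D
    by (simp add: field_simps)
qed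

lemma count_inter:
  assumes U: "finite U" and S: "S \<subseteq> U" "card S = m" and k: "k \<le> m"
  shows "card {T. T \<subseteq> U \<and> card T = m \<and> card (S \<inter> T) = k} = (m choose k) * ((card U - m) choose (m - k))"
proof -
  have fS: "finite S" using U S finite_subset by blast
  have "bij_betw (\<lambda>T. (S \<inter> T, T - S)) {T. T \<subseteq> U \<and> card T = m \<and> card (S \<inter> T) = k}
          ({A. A \<subseteq> S \<and> card A = k} \<times> {B. B \<subseteq> U - S \<and> card B = m - k})"
  proof (rule bij_betwI[where g="\<lambda>(A,B). A \<union> B"])
    show "(\<lambda>T. (S \<inter> T, T - S)) \<in> {T. T \<subseteq> U \<and> card T = m \<and> card (S \<inter> T) = k} \<rightarrow>
          {A. A \<subseteq> S \<and> card A = k} \<times> {B. B \<subseteq> U - S \<and> card B = m - k}"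
    proof
      fix T assume T: "T \<in> {T. T \<subseteq> U \<and> card T = m \<and> card (S \<inter> T) = k}"
      then have fT: "finite T" using U finite_subset by blast
      have "card T = card (S \<inter> T) + card (T - S)"
        using card_Int_Diff[OF fT, of S] by (simp add: Int_commute)
      then show "(S \<inter> T, T - S) \<in> {A. A \<subseteq> S \<and> card A = k} \<times> {B. B \<subseteq> U - S \<and> card B = m - k}"
        using T by auto
    qed
    show "(\<lambda>(A, B). A \<union> B) \<in> {A. A \<subseteq> S \<and> card A = k} \<times> {B. B \<subseteq> U - S \<and> card B = m - k} \<rightarrow>
          {T. T \<subseteq> U \<and> card T = m \<and> card (S \<inter> T) = k}"
    proof
      fix p assume p: "p \<in> {A. A \<subseteq> S \<and> card A = k} \<times> {B. B \<subseteq> U - S \<and> card B = m - k}"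
      obtain A B where AB: "p = (A, B)" by force
      have A: "A \<subseteq> S" "card A = k" and B: "B \<subseteq> U - S" "card B = m - k" using p AB by auto
      have fA: "finite A" using A fS finite_subset by blast
      have fB: "finite B" using B U finite_subset by blast
      have disj: "A \<inter> B = {}" using A B by auto
      have "card (A \<union> B) = m" using card_Un_disjoint[OF fA fB disj] A B k by simp
      moreover have "S \<inter> (A \<union> B) = A" using A B by auto
      ultimately show "(case p of (A, B) \<Rightarrow> A \<union> B) \<in> {T. T \<subseteq> U \<and> card T = m \<and> card (S \<inter> T) = k}"
        using AB A B S by auto
    qed
    show "\<And>T. T \<in> {T. T \<subseteq> U \<and> card T = m \<and> card (S \<inter> T) = k} \<Longrightarrow> (case (S \<inter> T, T - S) of (A, B) \<Rightarrow> A \<union> B) = T"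
      by auto
    show "\<And>p. p \<in> {A. A \<subseteq> S \<and> card A = k} \<times> {B. B \<subseteq> U - S \<and> card B = m - k} \<Longrightarrow> (S \<inter> (case p of (A, B) \<Rightarrow> A \<union> B), (case p of (A, B) \<Rightarrow> A \<union> B) - S) = p"
      by auto
  qed
  then have "card {T. T \<subseteq> U \<and> card T = m \<and> card (S \<inter> T) = k} = card ({A. A \<subseteq> S \<and> card A = k} \<times> {B. B \<subseteq> U - S \<and> card B = m - k})"
    by (rule bij_betw_same_card)
  also have "\<dots> = card {A. A \<subseteq> S \<and> card A = k} * card {B. B \<subseteq> U - S \<and> card B = m - k}"
    by (rule card_cartesian_product)
  also have "card {A. A \<subseteq> S \<and> card A = k} = m choose k" using n_subsets[OF fS, of k] S by simp
  also have "card {B. B \<subseteq> U - S \<and> card B = m - k} = (card U - m) choose (m - k)"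
    using n_subsets[of "U - S" "m - k"] U S fS by (simp add: card_Diff_subset)
  finally show ?thesis .
qed

lemma sum_inter:
  fixes f :: "nat \<Rightarrow> real"
  assumes U: "finite U" and S: "S \<subseteq> U" "card S = m"
  shows "(\<Sum>T\<in>{T. T \<subseteq> U \<and> card T = m}. f (card (S \<inter> T)))
       = (\<Sum>k\<le>m. real (m choose k) * real ((card U - m) choose (m - k)) * f k)"
proof -
  have fS: "finite S" using U S finite_subset by blast
  have fin: "finite {T. T \<subseteq> U \<and> card T = m}" using U by auto
  have "(\<Sum>T\<in>{T. T \<subseteq> U \<and> card T = m}. f (card (S \<inter> T)))
      = (\<Sum>k\<le>m. \<Sum>T\<in>{T \<in> {T. T \<subseteq> U \<and> card T = m}. card (S \<inter> T) = k}. f (card (S \<inter> T)))"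
  proof (rule sum.group[symmetric])
    show "(\<lambda>T. card (S \<inter> T)) ` {T. T \<subseteq> U \<and> card T = m} \<subseteq> {..m}"
    proof
      fix k assume "k \<in> (\<lambda>T. card (S \<inter> T)) ` {T. T \<subseteq> U \<and> card T = m}"
      then obtain T where "k = card (S \<inter> T)" by blast
      then have "k \<le> card S" using fS by (simp add: card_mono)
      then show "k \<in> {..m}" using S by simp
    qed
  qed (use fin in auto)
  also have "\<dots> = (\<Sum>k\<le>m. real (card {T. T \<subseteq> U \<and> card T = m \<and> card (S \<inter> T) = k}) * f k)"
  proof (rule sum.cong[OF refl])
    fix k assume "k \<in> {..m}"
    have "(\<Sum>T\<in>{T \<in> {T. T \<subseteq> U \<and> card T = m}. card (S \<inter> T) = k}. f (card (S \<inter> T)))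
        = (\<Sum>T\<in>{T \<in> {T. T \<subseteq> U \<and> card T = m}. card (S \<inter> T) = k}. f k)"
      by (rule sum.cong) auto
    also have "{T \<in> {T. T \<subseteq> U \<and> card T = m}. card (S \<inter> T) = k} = {T. T \<subseteq> U \<and> card T = m \<and> card (S \<inter> T) = k}"
      by auto
    finally show "(\<Sum>T\<in>{T \<in> {T. T \<subseteq> U \<and> card T = m}. card (S \<inter> T) = k}. f (card (S \<inter> T)))
        = real (card {T. T \<subseteq> U \<and> card T = m \<and> card (S \<inter> T) = k}) * f k" by simp
  qed
  also have "\<dots> = (\<Sum>k\<le>m. real (m choose k) * real ((card U - m) choose (m - k)) * f k)"
    by (rule sum.cong[OF refl]) (simp add: count_inter[OF U S])
  finally show ?thesis .
qed

locale ustat = prob_space M for M :: "'a measure" +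
  fixes N :: "'e measure" and X :: "nat \<Rightarrow> 'a \<Rightarrow> 'e" and h :: "(nat \<Rightarrow> 'e) \<Rightarrow> real" and n m :: nat
  assumes m1: "m \<ge> 1" and n2m: "n \<ge> 2 * m"
    and X_meas: "\<And>i. i < n \<Longrightarrow> X i \<in> measurable M N"
    and indep: "indep_vars (\<lambda>_. N) X {..<n}"
    and ident: "\<And>i. i < n \<Longrightarrow> distr M N (X i) = distr M N (X 0)"
    and h_meas: "h \<in> borel_measurable (PiM {..<m} (\<lambda>_. N))"
    and h_sym: "\<And>x \<pi>. x \<in> space (PiM {..<m} (\<lambda>_. N)) \<Longrightarrow> \<pi> permutes {..<m} \<Longrightarrow>
           h (kargs m (x \<circ> \<pi>)) = h x"
    and h_sq: "integrable M (\<lambda>\<omega>. (h (kargs m (\<lambda>i. X i \<omega>)))\<^sup>2)"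
begin

definition P where "P = distr M N (X 0)"
definition Q where "Q J = PiM J (\<lambda>_. P)"

lemma n_pos: "0 < n" using m1 n2m by linarith

lemma X0_meas: "X 0 \<in> measurable M N" using X_meas n_pos by blast

lemma prob_P: "prob_space P"
  unfolding P_def by (rule prob_space_distr[OF X0_meas])

lemma sets_P: "sets P = sets N" and space_P: "space P = space N"
  by (simp_all add: P_def)

lemma prob_Q: "prob_space (Q J)"
  unfolding Q_def using prob_P by (intro prob_space_PiM) auto

lemma sets_Q: "sets (Q J) = sets (PiM J (\<lambda>_. N))"
  unfolding Q_def by (rule sets_PiM_cong) (auto simp: sets_P)

lemma space_Q: "space (Q J) = space (PiM J (\<lambda>_. N))"
  using sets_Q by (rule sets_eq_imp_space_eq)

lemma meas_Q: "measurable (Q J) K = measurable (PiM J (\<lambda>_. N)) K"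
  by (rule measurable_cong_sets) (auto simp: sets_Q)

lemma psf: "product_sigma_finite (\<lambda>_. P)"
  using prob_P unfolding product_sigma_finite_def by (simp add: prob_space_imp_sigma_finite)

lemma distr_all: "distr M (PiM {..<n} (\<lambda>_. N)) (\<lambda>\<omega>. \<lambda>i\<in>{..<n}. X i \<omega>) = Q {..<n}"
proof -
  have "distr M (PiM {..<n} (\<lambda>_. N)) (\<lambda>\<omega>. \<lambda>i\<in>{..<n}. X i \<omega>) = PiM {..<n} (\<lambda>i. distr M N (X i))"
  proof -
    have "indep_vars (\<lambda>_. N) X {..<n} \<longleftrightarrow> distr M (PiM {..<n} (\<lambda>_. N)) (\<lambda>\<omega>. \<lambda>i\<in>{..<n}. X i \<omega>) = PiM {..<n} (\<lambda>i. distr M N (X i))"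
      by (rule indep_vars_iff_distr_eq_PiM') (use n_pos X_meas in auto)
    then show ?thesis using indep by blast
  qed
  also have "\<dots> = Q {..<n}" unfolding Q_def P_def by (rule PiM_cong[OF refl]) (rule ident, simp)
  finally show ?thesis .
qed

lemma distr_X:
  assumes inj: "inj_on \<phi> J" and img: "\<phi> ` J \<subseteq> {..<n}"
  shows "distr M (PiM J (\<lambda>_. N)) (\<lambda>\<omega>. \<lambda>j\<in>J. X (\<phi> j) \<omega>) = Q J"
proof -
  let ?Y = "\<lambda>\<omega>. \<lambda>i\<in>{..<n}. X i \<omega>"
  let ?g = "\<lambda>x. \<lambda>j\<in>J. x (\<phi> j)"
  have Ym: "?Y \<in> measurable M (PiM {..<n} (\<lambda>_. N))"
    by (rule measurable_restrict) (use X_meas in auto)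
  have gm: "?g \<in> measurable (PiM {..<n} (\<lambda>_. N)) (PiM J (\<lambda>_. N))"
    by (rule measurable_restrict) (use img in \<open>auto intro!: measurable_component_singleton\<close>)
  have "distr M (PiM J (\<lambda>_. N)) (\<lambda>\<omega>. \<lambda>j\<in>J. X (\<phi> j) \<omega>) = distr M (PiM J (\<lambda>_. N)) (?g \<circ> ?Y)"
    by (rule distr_cong) (use img in \<open>auto simp: fun_eq_iff\<close>)
  also have "\<dots> = distr (distr M (PiM {..<n} (\<lambda>_. N)) ?Y) (PiM J (\<lambda>_. N)) ?g"
    by (rule distr_distr[symmetric, OF gm Ym])
  also have "\<dots> = distr (Q {..<n}) (PiM J (\<lambda>_. N)) ?g" by (simp add: distr_all)
  also have "\<dots> = distr (Q {..<n}) (PiM J (\<lambda>j. P)) ?g"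
    by (rule distr_cong) (auto simp: sets_Q[symmetric] Q_def)
  also have "\<dots> = Q J"
    unfolding Q_def using distr_PiM_reindex[of "{..<n}" "\<lambda>_. P" \<phi> J] prob_P inj img by auto
  finally show ?thesis .
qed

lemma Xvec_meas:
  assumes "\<phi> ` J \<subseteq> {..<n}"
  shows "(\<lambda>\<omega>. \<lambda>j\<in>J. X (\<phi> j) \<omega>) \<in> measurable M (PiM J (\<lambda>_. N))"
  by (rule measurable_restrict) (use assms X_meas in auto)

lemma L2:
  assumes inj: "inj_on \<phi> J" and img: "\<phi> ` J \<subseteq> {..<n}"
    and g: "(g :: _ \<Rightarrow> real) \<in> borel_measurable (PiM J (\<lambda>_. N))"
  shows "integral\<^sup>L M (\<lambda>\<omega>. g (\<lambda>j\<in>J. X (\<phi> j) \<omega>)) = integral\<^sup>L (Q J) g"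
    and "integrable M (\<lambda>\<omega>. g (\<lambda>j\<in>J. X (\<phi> j) \<omega>)) \<longleftrightarrow> integrable (Q J) g"
    and "(\<lambda>\<omega>. g (\<lambda>j\<in>J. X (\<phi> j) \<omega>)) \<in> borel_measurable M"
proof -
  note D = distr_X[OF inj img]
  note Ym = Xvec_meas[OF img]
  show "integral\<^sup>L M (\<lambda>\<omega>. g (\<lambda>j\<in>J. X (\<phi> j) \<omega>)) = integral\<^sup>L (Q J) g"
    using integral_distr[OF Ym g] D by simp
  show "integrable M (\<lambda>\<omega>. g (\<lambda>j\<in>J. X (\<phi> j) \<omega>)) \<longleftrightarrow> integrable (Q J) g"
    using integrable_distr_eq[OF Ym g] D by simp
  show "(\<lambda>\<omega>. g (\<lambda>j\<in>J. X (\<phi> j) \<omega>)) \<in> borel_measurable M"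
    using measurable_comp[OF Ym g] by (simp add: comp_def)
qed

end

context ustat begin

lemma h_sym_bij:
  assumes a: "bij_betw \<alpha> {..<m} A" and b: "bij_betw \<beta> {..<m} A"
    and x: "\<And>i. i \<in> A \<Longrightarrow> x i \<in> space N"
  shows "h (\<lambda>k\<in>{..<m}. x (\<alpha> k)) = h (\<lambda>k\<in>{..<m}. x (\<beta> k))"
proof -
  define \<pi> where "\<pi> k = (if k < m then the_inv_into {..<m} \<beta> (\<alpha> k) else k)" for k
  have "bij_betw (the_inv_into {..<m} \<beta> \<circ> \<alpha>) {..<m} {..<m}"
    using a bij_betw_the_inv_into[OF b] by (rule bij_betw_trans)
  then have "bij_betw \<pi> {..<m} {..<m}"
    by (rule bij_betw_cong[THEN iffD1, rotated]) (auto simp: \<pi>_def)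
  then have perm: "\<pi> permutes {..<m}"
    by (rule bij_imp_permutes) (auto simp: \<pi>_def)
  define y where "y = (\<lambda>k\<in>{..<m}. x (\<beta> k))"
  have y: "y \<in> space (PiM {..<m} (\<lambda>_. N))"
    using b x unfolding y_def space_PiM bij_betw_def by auto
  have "kargs m (y \<circ> \<pi>) = (\<lambda>k\<in>{..<m}. x (\<alpha> k))"
  proof (rule ext)
    fix k show "kargs m (y \<circ> \<pi>) k = (\<lambda>k\<in>{..<m}. x (\<alpha> k)) k"
    proof (cases "k < m")
      case True
      have ak: "\<alpha> k \<in> \<beta> ` {..<m}" using a b True unfolding bij_betw_def by auto
      have inv: "the_inv_into {..<m} \<beta> (\<alpha> k) \<in> {..<m}"
        using bij_betw_the_inv_into[OF b] a True unfolding bij_betw_def by auto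
      have "\<beta> (the_inv_into {..<m} \<beta> (\<alpha> k)) = \<alpha> k"
        using b ak by (intro f_the_inv_into_f) (auto simp: bij_betw_def)
      then show ?thesis using True inv by (simp add: kargs_def y_def \<pi>_def)
    qed (simp add: kargs_def)
  qed
  then show ?thesis using h_sym[OF y perm] by (simp add: y_def)
qed

lemma kargs_X: "kargs m (\<lambda>i. X i \<omega>) = (\<lambda>k\<in>{..<m}. X (id k) \<omega>)"
  by (simp add: kargs_def restrict_def)

lemma id_inj: "inj_on id {..<m}" by simp
lemma id_img: "id ` {..<m} \<subseteq> {..<n}" using n2m by auto

lemma h_meas_Q: "h \<in> borel_measurable (Q {..<m})"
  using h_meas by (simp add: meas_Q)

lemma h_sq_Q: "integrable (Q {..<m}) (\<lambda>y. (h y)\<^sup>2)"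
proof -
  have "integrable M (\<lambda>\<omega>. (\<lambda>y. (h y)\<^sup>2) (\<lambda>k\<in>{..<m}. X (id k) \<omega>))"
    using h_sq by (simp add: kargs_X)
  moreover have "(\<lambda>y. (h y)\<^sup>2) \<in> borel_measurable (PiM {..<m} (\<lambda>_. N))" using h_meas by measurable
  ultimately show ?thesis using L2(2)[OF id_inj id_img] by blast
qed

lemma h_int_Q: "integrable (Q {..<m}) h"
proof -
  interpret Qp: prob_space "Q {..<m}" by (rule prob_Q)
  show ?thesis by (rule Qp.square_integrable_imp_integrable[OF h_meas_Q h_sq_Q])
qed

definition theta0 where "theta0 = integral\<^sup>L (Q {..<m}) h"

lemma Utheta_eq: "Utheta M X m h = theta0"
proof -
  have "Utheta M X m h = integral\<^sup>L M (\<lambda>\<omega>. h (\<lambda>k\<in>{..<m}. X (id k) \<omega>))"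
    by (simp add: Utheta_def kargs_X)
  also have "\<dots> = theta0" unfolding theta0_def by (rule L2(1)[OF id_inj id_img h_meas])
  finally show ?thesis .
qed

definition hv where "hv \<rho> \<omega> = h (\<lambda>k\<in>{..<m}. X (\<rho> k) \<omega>)"

lemma hv_props:
  assumes inj: "inj_on \<rho> {..<m}" and img: "\<rho> ` {..<m} \<subseteq> {..<n}"
  shows "integrable M (\<lambda>\<omega>. (hv \<rho> \<omega>)\<^sup>2)" and "integrable M (hv \<rho>)"
    and "integral\<^sup>L M (hv \<rho>) = theta0" and "hv \<rho> \<in> borel_measurable M"
proof -
  have m2: "(\<lambda>y. (h y)\<^sup>2) \<in> borel_measurable (PiM {..<m} (\<lambda>_. N))" using h_meas by measurable
  show "integrable M (\<lambda>\<omega>. (hv \<rho> \<omega>)\<^sup>2)"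
    using L2(2)[OF inj img m2] h_sq_Q by (simp add: hv_def)
  show "integrable M (hv \<rho>)"
    using L2(2)[OF inj img h_meas] h_int_Q unfolding hv_def by simp
  show "integral\<^sup>L M (hv \<rho>) = theta0"
    using L2(1)[OF inj img h_meas] unfolding hv_def theta0_def by simp
  show "hv \<rho> \<in> borel_measurable M"
    using L2(3)[OF inj img h_meas] unfolding hv_def by simp
qed

lemma integrable_prod_L2:
  fixes f g :: "'a \<Rightarrow> real"
  assumes "integrable M (\<lambda>x. (f x)\<^sup>2)" "integrable M (\<lambda>x. (g x)\<^sup>2)"
    and "f \<in> borel_measurable M" "g \<in> borel_measurable M"
  shows "integrable M (\<lambda>x. f x * g x)"
proof (rule Bochner_Integration.integrable_bound)
  show "integrable M (\<lambda>x. (f x)\<^sup>2 + (g x)\<^sup>2)" using assms by auto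
  show "(\<lambda>x. f x * g x) \<in> borel_measurable M" using assms by measurable
  show "AE x in M. norm (f x * g x) \<le> norm ((f x)\<^sup>2 + (g x)\<^sup>2)"
  proof (rule AE_I2)
    fix x
    have "2 * \<bar>f x\<bar> * \<bar>g x\<bar> \<le> (f x)\<^sup>2 + (g x)\<^sup>2"
      using sum_squares_bound[of "\<bar>f x\<bar>" "\<bar>g x\<bar>"] by (simp add: power2_eq_square)
    then show "norm (f x * g x) \<le> norm ((f x)\<^sup>2 + (g x)\<^sup>2)"
    proof -
      have "norm (f x * g x) = \<bar>f x\<bar> * \<bar>g x\<bar>" by (simp add: abs_mult)
      also have "\<dots> \<le> 2 * \<bar>f x\<bar> * \<bar>g x\<bar>" by simp
      also have "\<dots> \<le> (f x)\<^sup>2 + (g x)\<^sup>2" by fact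
      also have "\<dots> = norm ((f x)\<^sup>2 + (g x)\<^sup>2)" by simp
      finally show ?thesis .
    qed
  qed
qed

end

context ustat begin

definition F where "F c x = hcond P m h c x"
definition psi where "psi c k = (if k < c then k else k + (m - c))"
definition G where "G c y = h (\<lambda>k\<in>{..<m}. y k) * h (\<lambda>k\<in>{..<m}. y (psi c k))"
definition K where "K c = integral\<^sup>L (Q {..<2*m-c}) (G c)"

lemma merge_eq: "c \<le> m \<Longrightarrow> kargs m (\<lambda>i. if i < c then x i else y i) = merge {..<c} {c..<m} (x, y)"
  by (auto simp: fun_eq_iff kargs_def merge_def)

lemma F_eq: "c \<le> m \<Longrightarrow> F c x = (\<integral>y. h (merge {..<c} {c..<m} (x, y)) \<partial>Q {c..<m})"
  by (simp add: F_def hcond_def merge_eq Q_def)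

lemma un_m: "c \<le> m \<Longrightarrow> {..<c} \<union> {c..<m} = {..<m}" by auto

lemma H_meas:
  assumes c: "c \<le> m"
  shows "(\<lambda>p. h (merge {..<c} {c..<m} p)) \<in> borel_measurable (Q {..<c} \<Otimes>\<^sub>M Q {c..<m})"
proof -
  have "merge {..<c} {c..<m} \<in> measurable (Q {..<c} \<Otimes>\<^sub>M Q {c..<m}) (Q {..<m})"
    using measurable_merge[of "{..<c}" "{c..<m}" "\<lambda>_. P"] un_m[OF c] by (simp add: Q_def)
  from measurable_compose[OF this h_meas_Q] show ?thesis .
qed

lemma F_meas:
  assumes c: "c \<le> m"
  shows "F c \<in> borel_measurable (Q {..<c})"
proof -
  interpret Qb: prob_space "Q {c..<m}" by (rule prob_Q)
  have "(\<lambda>x. \<integral>y. h (merge {..<c} {c..<m} (x, y)) \<partial>Q {c..<m}) \<in> borel_measurable (Q {..<c})"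
    by (rule Qb.borel_measurable_lebesgue_integral) (use H_meas[OF c] in simp)
  then show ?thesis by (simp add: F_eq[OF c] cong: measurable_cong)
qed

lemma F_meas': "c \<le> m \<Longrightarrow> F c \<in> borel_measurable (PiM {..<c} (\<lambda>_. N))"
  using F_meas by (simp add: meas_Q)

lemma F_integral:
  assumes c: "c \<le> m"
  shows "integral\<^sup>L (Q {..<c}) (F c) = theta0"
proof -
  interpret product_sigma_finite "\<lambda>_. P" by (rule psf)
  have "theta0 = integral\<^sup>L (Q ({..<c} \<union> {c..<m})) h" unfolding theta0_def using un_m[OF c] by simp
  also have "\<dots> = (\<integral>x. (\<integral>y. h (merge {..<c} {c..<m} (x, y)) \<partial>Q {c..<m}) \<partial>Q {..<c})"
  proof -
    have hi: "integrable (PiM ({..<c} \<union> {c..<m}) (\<lambda>_. P)) h" using h_int_Q un_m[OF c] by (simp add: Q_def)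
    have d: "{..<c} \<inter> {c..<m} = {}" by auto
    show ?thesis unfolding Q_def by (rule product_integral_fold[OF d _ _ hi]) auto
  qed
  also have "\<dots> = integral\<^sup>L (Q {..<c}) (F c)" using F_eq[OF c] by (metis (no_types, lifting) ext)
  finally show ?thesis by simp
qed

lemma reindex_meas:
  assumes "\<rho> ` {..<m} \<subseteq> J"
  shows "(\<lambda>y. \<lambda>k\<in>{..<m}. y (\<rho> k)) \<in> measurable (PiM J (\<lambda>_. N)) (PiM {..<m} (\<lambda>_. N))"
  by (rule measurable_restrict) (use assms in \<open>auto intro!: measurable_component_singleton\<close>)

lemma psi_inj: "c \<le> m \<Longrightarrow> inj_on (psi c) {..<m}"
  by (auto simp: inj_on_def psi_def)

lemma psi_img: "c \<le> m \<Longrightarrow> psi c ` {..<m} \<subseteq> {..<2*m-c}"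
  by (auto simp: psi_def)

lemma G_meas:
  assumes c: "c \<le> m"
  shows "G c \<in> borel_measurable (PiM {..<2*m-c} (\<lambda>_. N))"
proof -
  have r1: "(\<lambda>y. \<lambda>k\<in>{..<m}. y (id k)) \<in> measurable (PiM {..<2*m-c} (\<lambda>_. N)) (PiM {..<m} (\<lambda>_. N))"
    by (rule reindex_meas) (use c in auto)
  have r2: "(\<lambda>y. \<lambda>k\<in>{..<m}. y (psi c k)) \<in> measurable (PiM {..<2*m-c} (\<lambda>_. N)) (PiM {..<m} (\<lambda>_. N))"
    by (rule reindex_meas[OF psi_img[OF c]])
  have a: "(\<lambda>y. h (\<lambda>k\<in>{..<m}. y k)) \<in> borel_measurable (PiM {..<2*m-c} (\<lambda>_. N))"
    using measurable_compose[OF r1 h_meas] by simp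
  have b: "(\<lambda>y. h (\<lambda>k\<in>{..<m}. y (psi c k))) \<in> borel_measurable (PiM {..<2*m-c} (\<lambda>_. N))"
    using measurable_compose[OF r2 h_meas] by simp
  show ?thesis unfolding G_def using a b by measurable
qed

lemma G_int:
  assumes c: "c \<le> m"
  shows "integrable (Q {..<2*m-c}) (G c)"
proof -
  have inj: "inj_on id {..<2*m-c}" by simp
  have img: "id ` {..<2*m-c} \<subseteq> {..<n}" using n2m by auto
  have eq: "G c (\<lambda>j\<in>{..<2*m-c}. X (id j) \<omega>) = hv id \<omega> * hv (psi c) \<omega>" for \<omega>
  proof -
    have "(\<lambda>k\<in>{..<m}. (\<lambda>j\<in>{..<2*m-c}. X (id j) \<omega>) k) = (\<lambda>k\<in>{..<m}. X (id k) \<omega>)"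
      using c by (auto simp: fun_eq_iff)
    moreover have "(\<lambda>k\<in>{..<m}. (\<lambda>j\<in>{..<2*m-c}. X (id j) \<omega>) (psi c k)) = (\<lambda>k\<in>{..<m}. X (psi c k) \<omega>)"
      using psi_img[OF c] by (auto simp: fun_eq_iff)
    ultimately show ?thesis by (simp add: G_def hv_def)
  qed
  have pimg: "psi c ` {..<m} \<subseteq> {..<n}" using psi_img[OF c] n2m by auto
  have "integrable M (\<lambda>\<omega>. hv id \<omega> * hv (psi c) \<omega>)"
    using hv_props[OF id_inj id_img] hv_props[OF psi_inj[OF c] pimg] by (intro integrable_prod_L2) blast+
  then have "integrable M (\<lambda>\<omega>. G c (\<lambda>j\<in>{..<2*m-c}. X (id j) \<omega>))" by (simp only: eq)
  then show ?thesis by (rule iffD1[OF L2(2)[OF inj img G_meas[OF c]]])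
qed

end

context ustat begin

lemma shift_integral:
  assumes c: "c \<le> m" and x: "x \<in> space (Q {..<c})"
  shows "(\<integral>v. h (merge {..<c} {c..<m} (x, \<lambda>k. v (k + (m - c)))) \<partial>Q {m..<2*m-c}) = F c x"
proof -
  let ?sh = "\<lambda>v. \<lambda>k\<in>{c..<m}. v (k + (m - c))"
  have D: "distr (PiM {m..<2*m-c} (\<lambda>_. P)) (PiM {c..<m} (\<lambda>_. P)) ?sh = PiM {c..<m} (\<lambda>_. P)"
  proof -
    have i: "inj_on (\<lambda>k. k + (m - c)) {c..<m}" by (simp add: inj_on_def)
    have p: "(\<lambda>k. k + (m - c)) \<in> {c..<m} \<rightarrow> {m..<2*m-c}" using c by auto
    show ?thesis using distr_PiM_reindex[of "{m..<2*m-c}" "\<lambda>_. P", OF prob_P i p] by simp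
  qed
  have Hx: "(\<lambda>w. h (merge {..<c} {c..<m} (x, w))) \<in> borel_measurable (PiM {c..<m} (\<lambda>_. P))"
    using measurable_Pair2[OF H_meas[OF c] x] by (simp add: Q_def)
  have shm: "?sh \<in> measurable (PiM {m..<2*m-c} (\<lambda>_. P)) (PiM {c..<m} (\<lambda>_. P))"
    by (rule measurable_restrict) (use c in \<open>auto intro!: measurable_component_singleton\<close>)
  have "F c x = (\<integral>w. h (merge {..<c} {c..<m} (x, w)) \<partial>PiM {c..<m} (\<lambda>_. P))"
    by (simp add: F_eq[OF c] Q_def)
  also have "\<dots> = (\<integral>w. h (merge {..<c} {c..<m} (x, w)) \<partial>distr (PiM {m..<2*m-c} (\<lambda>_. P)) (PiM {c..<m} (\<lambda>_. P)) ?sh)"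
    by (simp add: D)
  also have "\<dots> = (\<integral>v. h (merge {..<c} {c..<m} (x, ?sh v)) \<partial>PiM {m..<2*m-c} (\<lambda>_. P))"
    by (rule integral_distr[OF shm Hx])
  also have "\<dots> = (\<integral>v. h (merge {..<c} {c..<m} (x, \<lambda>k. v (k + (m - c)))) \<partial>Q {m..<2*m-c})"
    by (simp add: Q_def)
  finally show ?thesis by simp
qed

lemma G_merge:
  assumes c: "c \<le> m"
  shows "G c (merge {..<c} {c..<2*m-c} (x, merge {c..<m} {m..<2*m-c} (u, v)))
       = h (merge {..<c} {c..<m} (x, u)) * h (merge {..<c} {c..<m} (x, \<lambda>k. v (k + (m - c))))"
proof -
  have 1: "(\<lambda>k\<in>{..<m}. merge {..<c} {c..<2*m-c} (x, merge {c..<m} {m..<2*m-c} (u, v)) k) = merge {..<c} {c..<m} (x, u)"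
    using c by (auto simp: fun_eq_iff merge_def)
  have 2: "(\<lambda>k\<in>{..<m}. merge {..<c} {c..<2*m-c} (x, merge {c..<m} {m..<2*m-c} (u, v)) (psi c k)) = merge {..<c} {c..<m} (x, \<lambda>k. v (k + (m - c)))"
    using c by (auto simp: fun_eq_iff merge_def psi_def)
  show ?thesis unfolding G_def 1 2 ..
qed

lemma inner_integral:
  assumes c: "c \<le> m" and x: "x \<in> space (Q {..<c})"
    and int: "integrable (Q {c..<2*m-c}) (\<lambda>z. G c (merge {..<c} {c..<2*m-c} (x, z)))"
  shows "(\<integral>z. G c (merge {..<c} {c..<2*m-c} (x, z)) \<partial>Q {c..<2*m-c}) = (F c x)\<^sup>2"
proof -
  interpret product_sigma_finite "\<lambda>_. P" by (rule psf)
  have un: "{c..<m} \<union> {m..<2*m-c} = {c..<2*m-c}" using c by auto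
  have d: "{c..<m} \<inter> {m..<2*m-c} = {}" by auto
  have int': "integrable (PiM ({c..<m} \<union> {m..<2*m-c}) (\<lambda>_. P)) (\<lambda>z. G c (merge {..<c} {c..<2*m-c} (x, z)))"
    using int by (simp add: un Q_def)
  have "(\<integral>z. G c (merge {..<c} {c..<2*m-c} (x, z)) \<partial>Q {c..<2*m-c})
      = (\<integral>z. G c (merge {..<c} {c..<2*m-c} (x, z)) \<partial>PiM ({c..<m} \<union> {m..<2*m-c}) (\<lambda>_. P))"
    by (simp add: un Q_def)
  also have "\<dots> = (\<integral>u. (\<integral>v. G c (merge {..<c} {c..<2*m-c} (x, merge {c..<m} {m..<2*m-c} (u, v))) \<partial>PiM {m..<2*m-c} (\<lambda>_. P)) \<partial>PiM {c..<m} (\<lambda>_. P))"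
    by (rule product_integral_fold[OF d _ _ int']) auto
  also have "\<dots> = (\<integral>u. h (merge {..<c} {c..<m} (x, u)) * (\<integral>v. h (merge {..<c} {c..<m} (x, \<lambda>k. v (k + (m - c)))) \<partial>Q {m..<2*m-c}) \<partial>Q {c..<m})"
    by (simp add: G_merge[OF c] Q_def)
  also have "\<dots> = (\<integral>u. h (merge {..<c} {c..<m} (x, u)) * F c x \<partial>Q {c..<m})"
    by (simp add: shift_integral[OF c x])
  also have "\<dots> = F c x * F c x"
    by (simp add: F_eq[OF c])
  finally show ?thesis by (simp add: power2_eq_square)
qed

lemma K_eq:
  assumes c: "c \<le> m"
  shows "integrable (Q {..<c}) (\<lambda>x. (F c x)\<^sup>2)" and "K c = (\<integral>x. (F c x)\<^sup>2 \<partial>Q {..<c})"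
proof -
  interpret product_sigma_finite "\<lambda>_. P" by (rule psf)
  interpret PS: pair_sigma_finite "Q {..<c}" "Q {c..<2*m-c}"
    unfolding pair_sigma_finite_def by (intro conjI prob_space_imp_sigma_finite prob_Q)
  have AB: "{..<c} \<union> {c..<2*m-c} = {..<2*m-c}" using c by auto
  have d: "{..<c} \<inter> {c..<2*m-c} = {}" by auto
  have Gi: "integrable (PiM ({..<c} \<union> {c..<2*m-c}) (\<lambda>_. P)) (G c)"
    using G_int[OF c] by (simp add: AB Q_def)
  have Kf: "K c = (\<integral>x. (\<integral>z. G c (merge {..<c} {c..<2*m-c} (x, z)) \<partial>Q {c..<2*m-c}) \<partial>Q {..<c})"
  proof -
    have "K c = integral\<^sup>L (PiM ({..<c} \<union> {c..<2*m-c}) (\<lambda>_. P)) (G c)"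
      by (simp add: K_def AB Q_def)
    also have "\<dots> = (\<integral>x. (\<integral>z. G c (merge {..<c} {c..<2*m-c} (x, z)) \<partial>PiM {c..<2*m-c} (\<lambda>_. P)) \<partial>PiM {..<c} (\<lambda>_. P))"
      by (rule product_integral_fold[OF d _ _ Gi]) auto
    finally show ?thesis by (simp add: Q_def)
  qed
  have f_int: "integrable (Q {..<c} \<Otimes>\<^sub>M Q {c..<2*m-c}) (\<lambda>p. G c (merge {..<c} {c..<2*m-c} p))"
    unfolding Q_def
    by (rule integrable_distr[OF measurable_merge]) (simp add: distr_merge[OF d] Gi)
  have AEi: "AE x in Q {..<c}. integrable (Q {c..<2*m-c}) (\<lambda>z. G c (merge {..<c} {c..<2*m-c} (x, z)))"
    using PS.AE_integrable_fst'[OF f_int] by simp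
  have I1: "integrable (Q {..<c}) (\<lambda>x. \<integral>z. G c (merge {..<c} {c..<2*m-c} (x, z)) \<partial>Q {c..<2*m-c})"
    using PS.integrable_fst'[OF f_int] by simp
  have AEeq: "AE x in Q {..<c}. (\<integral>z. G c (merge {..<c} {c..<2*m-c} (x, z)) \<partial>Q {c..<2*m-c}) = (F c x)\<^sup>2"
    using AEi AE_space by eventually_elim (rule inner_integral[OF c])
  have m1: "(\<lambda>x. \<integral>z. G c (merge {..<c} {c..<2*m-c} (x, z)) \<partial>Q {c..<2*m-c}) \<in> borel_measurable (Q {..<c})"
    using I1 by (rule borel_measurable_integrable)
  have m2: "(\<lambda>x. (F c x)\<^sup>2) \<in> borel_measurable (Q {..<c})"
    using F_meas[OF c] by measurable
  show "integrable (Q {..<c}) (\<lambda>x. (F c x)\<^sup>2)"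
    using integrable_cong_AE[OF m1 m2 AEeq] I1 by simp
  show "K c = (\<integral>x. (F c x)\<^sup>2 \<partial>Q {..<c})"
    unfolding Kf by (rule integral_cong_AE[OF m1 m2 AEeq])
qed

end

context ustat begin

definition s where "s c = K c - theta0\<^sup>2"

lemma F_restrict: "F c x = F c (restrict x {..<c})"
proof -
  have "(\<lambda>i. if i < c then restrict x {..<c} i else y i) = (\<lambda>i. if i < c then x i else y i)" for y
    by auto
  then show ?thesis by (simp add: F_def hcond_def)
qed

lemma K0: "K 0 = theta0\<^sup>2"
proof -
  interpret Qp: prob_space "Q {..<0::nat}" by (rule prob_Q)
  define \<kappa> where "\<kappa> = F 0 (\<lambda>_. undefined)"
  have Fc: "F 0 x = \<kappa>" for x
    using F_restrict[of 0 x] by (simp add: \<kappa>_def restrict_def)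
  have "theta0 = integral\<^sup>L (Q {..<0}) (F 0)" using F_integral[of 0] by simp
  also have "\<dots> = \<kappa>"
  proof -
    have "F 0 = (\<lambda>_. \<kappa>)" by (rule ext) (simp add: Fc)
    then show ?thesis using prob_space.prob_space[OF prob_Q[of "{}::nat set"]] by simp
  qed
  finally have t: "theta0 = \<kappa>" .
  have "K 0 = (\<integral>x. (F 0 x)\<^sup>2 \<partial>Q {..<0})" using K_eq(2)[of 0] by simp
  also have "\<dots> = \<kappa>\<^sup>2" using prob_space.prob_space[OF prob_Q[of "{}::nat set"]] by (simp add: Fc)
  finally show ?thesis by (simp add: t)
qed

lemma Usigma2_eq:
  assumes c: "c \<le> m"
  shows "Usigma2 M N X m h c = s c"
proof (cases "c = 0")
  case True
  then show ?thesis by (simp add: Usigma2_def s_def K0)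
next
  case False
  interpret Qp: prob_space "Q {..<c}" by (rule prob_Q)
  have inj: "inj_on id {..<c}" by simp
  have img: "id ` {..<c} \<subseteq> {..<n}" using c n2m by auto
  have Fm: "F c \<in> borel_measurable (PiM {..<c} (\<lambda>_. N))" by (rule F_meas'[OF c])
  have eqF: "hcond (distr M N (X 0)) m h c (\<lambda>i. X i \<omega>) = F c (\<lambda>j\<in>{..<c}. X (id j) \<omega>)" for \<omega>
    using F_restrict[of c "\<lambda>i. X i \<omega>"] by (simp add: F_def P_def)
  have E1: "expectation (\<lambda>\<omega>. F c (\<lambda>j\<in>{..<c}. X j \<omega>)) = theta0"
    using L2(1)[OF inj img Fm] F_integral[OF c] by simp
  have Fm2: "(\<lambda>x. (F c x - theta0)\<^sup>2) \<in> borel_measurable (PiM {..<c} (\<lambda>_. N))" using Fm by measurable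
  have "Usigma2 M N X m h c = variance (\<lambda>\<omega>. F c (\<lambda>j\<in>{..<c}. X (id j) \<omega>))"
    using False by (simp add: Usigma2_def eqF)
  also have "\<dots> = expectation (\<lambda>\<omega>. (\<lambda>x. (F c x - theta0)\<^sup>2) (\<lambda>j\<in>{..<c}. X (id j) \<omega>))"
    by (simp add: E1)
  also have "\<dots> = (\<integral>x. (F c x - theta0)\<^sup>2 \<partial>Q {..<c})"
    by (rule L2(1)[OF inj img Fm2])
  also have "\<dots> = Qp.variance (F c)"
    using F_integral[OF c] by simp
  also have "\<dots> = Qp.expectation (\<lambda>x. (F c x)\<^sup>2) - (Qp.expectation (F c))\<^sup>2"
  proof (rule Qp.variance_eq)
    show "integrable (Q {..<c}) (\<lambda>x. (F c x)\<^sup>2)" by (rule K_eq(1)[OF c])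
    then show "integrable (Q {..<c}) (F c)"
      by (rule Qp.square_integrable_imp_integrable[OF F_meas[OF c]])
  qed
  also have "\<dots> = s c" using K_eq(2)[OF c] F_integral[OF c] by (simp add: s_def)
  finally show ?thesis .
qed

end

context ustat begin

definition nu where "nu S = (!) (sorted_list_of_set S)"

lemma nu_bij: "finite S \<Longrightarrow> card S = m \<Longrightarrow> bij_betw (nu S) {..<m} S"
  unfolding nu_def by (rule bij_betw_nth) auto

lemma psi_image: "c \<le> m \<Longrightarrow> psi c ` {..<m} = {..<c} \<union> {m..<2*m-c}"
proof
  assume c: "c \<le> m"
  show "psi c ` {..<m} \<subseteq> {..<c} \<union> {m..<2*m-c}" using c by (auto simp: psi_def)
  show "{..<c} \<union> {m..<2*m-c} \<subseteq> psi c ` {..<m}"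
  proof
    fix k assume k: "k \<in> {..<c} \<union> {m..<2*m-c}"
    show "k \<in> psi c ` {..<m}"
    proof (cases "k < c")
      case True
      then have "k = psi c k" by (simp add: psi_def)
      moreover have "k \<in> {..<m}" using True c by simp
      ultimately show ?thesis by blast
    next
      case False
      then have "k = psi c (k - (m - c))" "k - (m - c) \<in> {..<m}" using k c by (auto simp: psi_def)
      then show ?thesis by blast
    qed
  qed
qed

lemma pair_exp:
  assumes S: "S \<subseteq> {..<n}" "card S = m" and T: "T \<subseteq> {..<n}" "card T = m"
  shows "integrable M (\<lambda>\<omega>. hv (nu S) \<omega> * hv (nu T) \<omega>)"
    and "expectation (\<lambda>\<omega>. hv (nu S) \<omega> * hv (nu T) \<omega>) = K (card (S \<inter> T))"
proof -
  define c where "c = card (S \<inter> T)"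
  have fS: "finite S" and fT: "finite T" using S T finite_subset by auto
  have cm: "c \<le> m" unfolding c_def using S fS by (metis card_mono inf_le1)
  have cST: "card (S - T) = m - c" using card_Diff_subset_Int[of S T] fS S by (simp add: c_def)
  have cTS: "card (T - S) = m - c" using card_Diff_subset_Int[of T S] fT T by (simp add: c_def Int_commute)
  obtain f1 where f1: "bij_betw f1 {..<c} (S \<inter> T)"
    using finite_same_card_bij[of "{..<c}" "S \<inter> T"] fS by (auto simp: c_def)
  obtain f2 where f2: "bij_betw f2 {c..<m} (S - T)"
    using finite_same_card_bij[of "{c..<m}" "S - T"] fS cST by auto
  obtain f3 where f3: "bij_betw f3 {m..<2*m-c} (T - S)"
    using finite_same_card_bij[of "{m..<2*m-c}" "T - S"] fT cTS by auto
  define \<phi> where "\<phi> k = (if k < c then f1 k else if k < m then f2 k else f3 k)" for k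
  have i1: "\<phi> ` {..<c} = S \<inter> T"
  proof -
    have "\<phi> ` {..<c} = f1 ` {..<c}" by (rule image_cong) (auto simp: \<phi>_def)
    then show ?thesis using f1 by (simp add: bij_betw_def)
  qed
  have i2: "\<phi> ` {c..<m} = S - T"
  proof -
    have "\<phi> ` {c..<m} = f2 ` {c..<m}" by (rule image_cong) (auto simp: \<phi>_def)
    then show ?thesis using f2 by (simp add: bij_betw_def)
  qed
  have i3: "\<phi> ` {m..<2*m-c} = T - S"
  proof -
    have "\<phi> ` {m..<2*m-c} = f3 ` {m..<2*m-c}" by (rule image_cong) (auto simp: \<phi>_def)
    then show ?thesis using f3 by (simp add: bij_betw_def)
  qed
  have iS: "\<phi> ` {..<m} = S"
  proof -
    have "{..<m} = {..<c} \<union> {c..<m}" using cm by auto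
    then have "\<phi> ` {..<m} = (S \<inter> T) \<union> (S - T)" using i1 i2 by (simp add: image_Un)
    then show ?thesis by auto
  qed
  have iT: "(\<phi> \<circ> psi c) ` {..<m} = T"
  proof -
    have "(\<phi> \<circ> psi c) ` {..<m} = \<phi> ` ({..<c} \<union> {m..<2*m-c})" by (simp only: image_comp[symmetric] psi_image[OF cm])
    also have "\<dots> = (S \<inter> T) \<union> (T - S)" using i1 i3 by (simp add: image_Un)
    finally show ?thesis by auto
  qed
  have iU: "\<phi> ` {..<2*m-c} = S \<union> T"
  proof -
    have "{..<2*m-c} = {..<c} \<union> {c..<m} \<union> {m..<2*m-c}" using cm by auto
    then have "\<phi> ` {..<2*m-c} = (S \<inter> T) \<union> (S - T) \<union> (T - S)" using i1 i2 i3 by (simp add: image_Un)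
    then show ?thesis by auto
  qed
  have cU: "card (S \<union> T) = 2*m - c"
    using card_Un_Int[OF fS fT] S T by (simp add: c_def)
  have injU: "inj_on \<phi> {..<2*m-c}"
    by (rule eq_card_imp_inj_on) (simp_all add: iU cU)
  have bS: "bij_betw \<phi> {..<m} S"
    unfolding bij_betw_def using iS inj_on_subset[OF injU] cm by auto
  have bT: "bij_betw (\<phi> \<circ> psi c) {..<m} T"
    unfolding bij_betw_def
  proof
    show "inj_on (\<phi> \<circ> psi c) {..<m}"
      by (rule comp_inj_on[OF psi_inj[OF cm] inj_on_subset[OF injU psi_img[OF cm]]])
  qed (rule iT)
  have imgU: "\<phi> ` {..<2*m-c} \<subseteq> {..<n}" using iU S T by auto
  have sp: "X i \<omega> \<in> space N" if "\<omega> \<in> space M" "i < n" for i \<omega>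
    using measurable_space[OF X_meas[OF that(2)] that(1)] .
  have eq: "hv (nu S) \<omega> * hv (nu T) \<omega> = G c (\<lambda>j\<in>{..<2*m-c}. X (\<phi> j) \<omega>)" if \<omega>: "\<omega> \<in> space M" for \<omega>
  proof -
    have xS: "\<And>i. i \<in> S \<Longrightarrow> X i \<omega> \<in> space N" using sp[OF \<omega>] S by auto
    have xT: "\<And>i. i \<in> T \<Longrightarrow> X i \<omega> \<in> space N" using sp[OF \<omega>] T by auto
    have e1: "hv (nu S) \<omega> = hv \<phi> \<omega>"
      unfolding hv_def by (rule h_sym_bij[OF nu_bij[OF fS S(2)] bS xS])
    have e2: "hv (nu T) \<omega> = hv (\<phi> \<circ> psi c) \<omega>"
      unfolding hv_def by (rule h_sym_bij[OF nu_bij[OF fT T(2)] bT xT])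
    have r1: "(\<lambda>k\<in>{..<m}. (\<lambda>j\<in>{..<2*m-c}. X (\<phi> j) \<omega>) k) = (\<lambda>k\<in>{..<m}. X (\<phi> k) \<omega>)"
      using cm by (auto simp: fun_eq_iff)
    have r2: "(\<lambda>k\<in>{..<m}. (\<lambda>j\<in>{..<2*m-c}. X (\<phi> j) \<omega>) (psi c k)) = (\<lambda>k\<in>{..<m}. X ((\<phi> \<circ> psi c) k) \<omega>)"
      using psi_img[OF cm] by (auto simp: fun_eq_iff)
    have "G c (\<lambda>j\<in>{..<2*m-c}. X (\<phi> j) \<omega>) = hv \<phi> \<omega> * hv (\<phi> \<circ> psi c) \<omega>"
      unfolding G_def r1 r2 hv_def ..
    then show ?thesis by (simp only: e1 e2)
  qed
  have "integrable M (\<lambda>\<omega>. G c (\<lambda>j\<in>{..<2*m-c}. X (\<phi> j) \<omega>))"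
    using L2(2)[OF injU imgU G_meas[OF cm]] G_int[OF cm] by blast
  then show "integrable M (\<lambda>\<omega>. hv (nu S) \<omega> * hv (nu T) \<omega>)"
  proof -
    have "integrable M (\<lambda>\<omega>. hv (nu S) \<omega> * hv (nu T) \<omega>) \<longleftrightarrow> integrable M (\<lambda>\<omega>. G c (\<lambda>j\<in>{..<2*m-c}. X (\<phi> j) \<omega>))"
      by (intro Bochner_Integration.integrable_cong refl eq)
    with \<open>integrable M (\<lambda>\<omega>. G c (\<lambda>j\<in>{..<2*m-c}. X (\<phi> j) \<omega>))\<close> show ?thesis by blast
  qed
  have "expectation (\<lambda>\<omega>. hv (nu S) \<omega> * hv (nu T) \<omega>) = expectation (\<lambda>\<omega>. G c (\<lambda>j\<in>{..<2*m-c}. X (\<phi> j) \<omega>))"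
    by (intro Bochner_Integration.integral_cong refl eq)
  also have "\<dots> = K c" unfolding K_def by (rule L2(1)[OF injU imgU G_meas[OF cm]])
  finally show "expectation (\<lambda>\<omega>. hv (nu S) \<omega> * hv (nu T) \<omega>) = K (card (S \<inter> T))" by (simp add: c_def)
qed

end

context ustat begin

lemma var_formula:
  "variance (\<lambda>\<omega>. 2 * Ustat n m h X \<omega>)
     = 4 * ((\<Sum>k\<le>m. real (m choose k) * real ((n - m) choose (m - k)) * s k) / real (n choose m))"
proof -
  define Sets where "Sets = {S. S \<subseteq> {..<n} \<and> card S = m}"
  define C where "C = real (n choose m)"
  have finS: "finite Sets" unfolding Sets_def by simp
  have cardS: "card Sets = n choose m" unfolding Sets_def using n_subsets[of "{..<n}" m] by simp
  have Cpos: "C > 0" unfolding C_def using n2m by simp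
  have memS: "S \<subseteq> {..<n}" "card S = m" if "S \<in> Sets" for S using that by (auto simp: Sets_def)
  have hU: "Ustat n m h X \<omega> = (\<Sum>S\<in>Sets. hv (nu S) \<omega>) / C" for \<omega>
    by (simp add: Ustat_def Sets_def C_def hv_def nu_def kargs_def)
  have Sprops: "integrable M (hv (nu S))" "expectation (hv (nu S)) = theta0" if "S \<in> Sets" for S
  proof -
    have fS: "finite S" using memS[OF that] finite_subset by blast
    have b: "bij_betw (nu S) {..<m} S" by (rule nu_bij[OF fS memS(2)[OF that]])
    have i: "inj_on (nu S) {..<m}" using b by (simp add: bij_betw_def)
    have im: "nu S ` {..<m} \<subseteq> {..<n}" using b memS[OF that] by (simp add: bij_betw_def)
    show "integrable M (hv (nu S))" by (rule hv_props(2)[OF i im])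
    show "expectation (hv (nu S)) = theta0" by (rule hv_props(3)[OF i im])
  qed
  have Pint: "integrable M (\<lambda>\<omega>. hv (nu S) \<omega> * hv (nu T) \<omega>)"
    and Pexp: "expectation (\<lambda>\<omega>. hv (nu S) \<omega> * hv (nu T) \<omega>) = K (card (S \<inter> T))"
    if "S \<in> Sets" "T \<in> Sets" for S T
    using pair_exp[OF memS[OF that(1)] memS[OF that(2)]] by auto
  define Y where "Y \<omega> = 2 * Ustat n m h X \<omega>" for \<omega>
  have Yeq: "Y = (\<lambda>\<omega>. (2 / C) * (\<Sum>S\<in>Sets. hv (nu S) \<omega>))"
    by (rule ext) (simp add: Y_def hU)
  have Y2eq: "(\<lambda>\<omega>. (Y \<omega>)\<^sup>2) = (\<lambda>\<omega>. (4 / C\<^sup>2) * (\<Sum>S\<in>Sets. \<Sum>T\<in>Sets. hv (nu S) \<omega> * hv (nu T) \<omega>))"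
  proof (rule ext)
    fix \<omega>
    have "(Y \<omega>)\<^sup>2 = (2 / C) * (2 / C) * ((\<Sum>S\<in>Sets. hv (nu S) \<omega>) * (\<Sum>T\<in>Sets. hv (nu T) \<omega>))"
      by (simp add: Yeq power2_eq_square)
    also have "\<dots> = (4 / C\<^sup>2) * (\<Sum>S\<in>Sets. \<Sum>T\<in>Sets. hv (nu S) \<omega> * hv (nu T) \<omega>)"
      by (simp add: sum_product power2_eq_square)
    finally show "(Y \<omega>)\<^sup>2 = (4 / C\<^sup>2) * (\<Sum>S\<in>Sets. \<Sum>T\<in>Sets. hv (nu S) \<omega> * hv (nu T) \<omega>)" .
  qed
  have IY: "integrable M Y"
  proof -
    have IS: "integrable M (\<lambda>x. \<Sum>S\<in>Sets. hv (nu S) x)"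
      by (rule Bochner_Integration.integrable_sum) (rule Sprops(1))
    then show ?thesis unfolding Yeq by (rule Bochner_Integration.integrable_mult_right)
  qed
  have IY2: "integrable M (\<lambda>\<omega>. (Y \<omega>)\<^sup>2)"
    unfolding Y2eq by (intro Bochner_Integration.integrable_mult_right Bochner_Integration.integrable_sum Pint)
  have EY: "expectation Y = 2 * theta0"
  proof -
    have "expectation Y = (2 / C) * (\<Sum>S\<in>Sets. expectation (hv (nu S)))"
    proof -
      have IS: "integrable M (\<lambda>x. \<Sum>S\<in>Sets. hv (nu S) x)" by (intro Bochner_Integration.integrable_sum Sprops(1))
      have "expectation (\<lambda>x. \<Sum>S\<in>Sets. hv (nu S) x) = (\<Sum>S\<in>Sets. expectation (hv (nu S)))"
        by (rule Bochner_Integration.integral_sum) (rule Sprops(1))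
      then show ?thesis unfolding Yeq using IS by simp
    qed
    also have "\<dots> = (2 / C) * (C * theta0)"
      using Sprops(2) by (simp add: cardS C_def)
    finally show ?thesis using Cpos by simp
  qed
  have EY2: "expectation (\<lambda>\<omega>. (Y \<omega>)\<^sup>2) = (4 / C\<^sup>2) * (\<Sum>S\<in>Sets. \<Sum>T\<in>Sets. K (card (S \<inter> T)))"
  proof -
    have "expectation (\<lambda>\<omega>. (Y \<omega>)\<^sup>2) = (4 / C\<^sup>2) * (\<Sum>S\<in>Sets. \<Sum>T\<in>Sets. expectation (\<lambda>\<omega>. hv (nu S) \<omega> * hv (nu T) \<omega>))"
    proof -
      have IS: "integrable M (\<lambda>x. \<Sum>S\<in>Sets. \<Sum>T\<in>Sets. hv (nu S) x * hv (nu T) x)" by (intro Bochner_Integration.integrable_sum Pint)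
      have "expectation (\<lambda>x. \<Sum>S\<in>Sets. \<Sum>T\<in>Sets. hv (nu S) x * hv (nu T) x) = (\<Sum>S\<in>Sets. expectation (\<lambda>x. \<Sum>T\<in>Sets. hv (nu S) x * hv (nu T) x))"
        by (rule Bochner_Integration.integral_sum) (intro Bochner_Integration.integrable_sum Pint)
      also have "\<dots> = (\<Sum>S\<in>Sets. \<Sum>T\<in>Sets. expectation (\<lambda>x. hv (nu S) x * hv (nu T) x))"
        by (rule sum.cong[OF refl], rule Bochner_Integration.integral_sum) (rule Pint)
      finally show ?thesis unfolding Y2eq using IS by simp
    qed
    also have "\<dots> = (4 / C\<^sup>2) * (\<Sum>S\<in>Sets. \<Sum>T\<in>Sets. K (card (S \<inter> T)))"
      using Pexp by simp
    finally show ?thesis .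
  qed
  define Z where "Z = (\<Sum>k\<le>m. real (m choose k) * real ((n - m) choose (m - k)) * s k)"
  have inner: "(\<Sum>T\<in>Sets. s (card (S \<inter> T))) = Z" if "S \<in> Sets" for S
    using sum_inter[of "{..<n}" S m s] memS[OF that] unfolding Sets_def Z_def by simp
  have "(\<Sum>S\<in>Sets. \<Sum>T\<in>Sets. K (card (S \<inter> T))) = (\<Sum>S\<in>Sets. \<Sum>T\<in>Sets. s (card (S \<inter> T)) + theta0\<^sup>2)"
    by (simp add: s_def)
  also have "\<dots> = (\<Sum>S\<in>Sets. Z + C * theta0\<^sup>2)"
    by (simp add: sum.distrib inner cardS C_def)
  also have "\<dots> = C * Z + C * C * theta0\<^sup>2"
    by (simp add: cardS C_def algebra_simps)
  finally have SS: "(\<Sum>S\<in>Sets. \<Sum>T\<in>Sets. K (card (S \<inter> T))) = C * Z + C * C * theta0\<^sup>2" .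
  have "variance Y = expectation (\<lambda>\<omega>. (Y \<omega>)\<^sup>2) - (expectation Y)\<^sup>2"
    by (rule variance_eq[OF IY IY2])
  also have "\<dots> = 4 * (Z / C)"
    unfolding EY2 EY SS using Cpos by (simp add: field_simps power2_eq_square)
  finally have "variance Y = 4 * (Z / C)" .
  moreover have "Y = (\<lambda>\<omega>. 2 * Ustat n m h X \<omega>)" by (rule ext) (simp add: Y_def)
  ultimately show ?thesis by (simp only: Z_def C_def)
qed

end

theorem lemma6:
  fixes M :: "'a measure" and N :: "'e measure" and X :: "nat \<Rightarrow> 'a \<Rightarrow> 'e"
    and h :: "(nat \<Rightarrow> 'e) \<Rightarrow> real" and n m :: nat
  assumes "prob_space M"
    and "m \<ge> 1" and "n \<ge> 2 * m"
    and "\<And>i. i < n \<Longrightarrow> X i \<in> measurable M N"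
    and "prob_space.indep_vars M (\<lambda>_. N) X {..<n}"
    and "\<And>i. i < n \<Longrightarrow> distr M N (X i) = distr M N (X 0)"
    and "h \<in> borel_measurable (PiM {..<m} (\<lambda>_. N))"
    and "\<And>x \<pi>. x \<in> space (PiM {..<m} (\<lambda>_. N)) \<Longrightarrow> \<pi> permutes {..<m} \<Longrightarrow>
           h (kargs m (x \<circ> \<pi>)) = h x"
    and "integrable M (\<lambda>\<omega>. (h (kargs m (\<lambda>i. X i \<omega>)))\<^sup>2)"
  shows "(let \<theta> = Utheta M X m h; \<sigma>2 = Usigma2 M N X m h in
          1 / real (n choose (2 * m)) * (1 / real ((2 * m) choose m)) *
          (\<Sum>c = 1..m. real ((n - m) choose (2 * m - c)) * real (m choose c) *
             (\<Sum>j = 0..c. real (c choose j) * real ((2 * m - c) choose (m - j)) *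
                (\<theta> * \<sigma>2 j + \<theta> * \<sigma>2 (c - j)))))
         = Utheta M X m h / 2 * prob_space.variance M (\<lambda>\<omega>. 2 * Ustat n m h X \<omega>)"
proof -
  interpret u: ustat M N X h n m
    by (intro ustat.intro ustat_axioms.intro) (rule assms | assumption)+
  have s0: "Usigma2 M N X m h 0 = 0" by (simp add: Usigma2_def)
  have sum_eq: "(\<Sum>k\<le>m. real (m choose k) * real ((n - m) choose (m - k)) * Usigma2 M N X m h k)
      = (\<Sum>k\<le>m. real (m choose k) * real ((n - m) choose (m - k)) * u.s k)"
    by (rule sum.cong[OF refl]) (simp add: u.Usigma2_eq)
  show ?thesis
    unfolding Let_def u.Utheta_eq
    using comb_identity[of "Usigma2 M N X m h" m n "u.theta0", OF s0 assms(2) assms(3)]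
    by (simp only: sum_eq u.var_formula)
qed

end
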